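(* Let $k\geq 2$ be an integer and let $G_k(x,t)=\sum_{n\geq 0}\sum_{w\in[k]^n} t^{\mathrm{cs}(w)}x^n$. Put $\phi=\dfrac{1-x(t-1)}{2x(t-1)}$ and \[\gamma(x,t)=\frac{k}{1-3x(t-1)}-\frac{2x(t-1)}{(1-3x(t-1))^{2}}\cdot\frac{U_{k}(\phi)-U_{k-1}(\phi)-1}{U_{k}(\phi)}.\] Then \begin{align*} G_k(x,t)=1+\frac{1+3x(t-1)}{(1-3x(t-1))(1+x(t-1))}\Bigg[&\frac{1}{1-x\gamma(x,t)}\\ &-\frac{2x(t-1)(k+1)}{(1+3x(t-1))U_{k}(\phi)}\left(\frac{1-x\,\frac{1+k-U_{k}(\phi)}{1-3x(t-1)}}{1-x\gamma(x,t)}+U_{k-1}(\phi)-1\right)+kx(t-1)-1\Bigg]. \end{align*}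
   Context: For an integer $k\geq 2$, $[k]=\{1,2,\ldots,k\}$ and a word over $k$ of length $n$ is an element $w=w_1\cdots w_n\in[k]^n$ ($[k]^0$ consists of the empty word). For such $w$, $\mathrm{cs}(w)$ is the number of indices $0\leq i\leq n-1$ with $|w_{i+1}-w_i|\leq 1$, where $w_0$ means $w_n$ (so $\mathrm{cs}$ of the empty word is $0$ and $\mathrm{cs}(w)=1$ for a word of length $1$). $U_n$ denotes the Chebyshev polynomial of the second kind: $U_0(x)=1$, $U_1(x)=2x$, $U_{n+1}(x)=2xU_n(x)-U_{n-1}(x)$. The identity is an identity of rational functions in $x,t$ (equivalently of formal power series in $x$ with coefficients polynomial in $t$). *)

theory Defs
  imports "HOL-Computational_Algebra.Polynomial" "HOL-Computational_Algebra.Fraction_Field"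
          "HOL-Computational_Algebra.Formal_Laurent_Series"
begin

fun chebU :: "nat \<Rightarrow> 'a::comm_ring_1 \<Rightarrow> 'a" where
  "chebU 0 z = 1"
| "chebU (Suc 0) z = 2 * z"
| "chebU (Suc (Suc n)) z = 2 * z * chebU (Suc n) z - chebU n z"

text \<open>Words of length n over [k] = {1..k}, represented as lists (w_1 ... w_n = w!0 ... w!(n-1)).\<close>
definition words :: "nat \<Rightarrow> nat \<Rightarrow> nat list set" where
  "words k n = {w. length w = n \<and> set w \<subseteq> {1..k}}"

definition cs :: "nat list \<Rightarrow> nat" where
  "cs w = card {i. i < length w \<and>
      \<bar>int (w ! ((i + 1) mod length w)) - int (w ! i)\<bar> \<le> 1}"

definition tvar :: "real poly fract" where
  "tvar = Fraction_Field.Fract [:0, 1:] 1"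

definition Gk :: "nat \<Rightarrow> real poly fract fps" where
  "Gk k = Abs_fps (\<lambda>n. \<Sum>w\<in>words k n. tvar ^ cs w)"

end

theory Submission
  imports Defs
begin


fun Vs :: "'a::comm_ring_1 \<Rightarrow> nat \<Rightarrow> 'a" where
  "Vs z 0 = 0"
| "Vs z (Suc 0) = 1"
| "Vs z (Suc (Suc n)) = 2 * z * Vs z (Suc n) - Vs z n"

lemma chebU_Vs: "chebU n z = Vs z (Suc n)"
  by (induction n z rule: chebU.induct) auto

lemma Vs_add: "Vs z (p+1) * Vs z (q+1) - Vs z p * Vs z q = Vs z (p+q+1)"
proof (induction p arbitrary: q)
  case 0 then show ?case by simp
next
  case (Suc p)
  have "Vs z (Suc p + 1) * Vs z (q + 1) - Vs z (Suc p) * Vs z q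
      = Vs z (p+1) * Vs z (Suc q + 1) - Vs z p * Vs z (Suc q)"
    by (simp add: algebra_simps)
  also have "\<dots> = Vs z (p + Suc q + 1)" by (rule Suc.IH)
  finally show ?case by simp
qed

lemma Vs_cassini: "Vs z (n+1) ^ 2 - Vs z (n+2) * Vs z n = 1"
proof (induction n)
  case 0 then show ?case by simp
next
  case (Suc n)
  then show ?case by (simp add: algebra_simps power2_eq_square)
qed

lemma Vs_sum1: "2 * (z - 1) * (\<Sum>n\<in>{1..m}. Vs z n) = Vs z (m+1) - Vs z m - 1"
proof (induction m)
  case 0 then show ?case by simp
next
  case (Suc m)
  have "2 * (z - 1) * (\<Sum>n\<in>{1..Suc m}. Vs z n) = 2 * (z - 1) * (\<Sum>n\<in>{1..m}. Vs z n) + 2*(z-1)* Vs z (Suc m)"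
    by (simp add: algebra_simps)
  also have "\<dots> = Vs z (Suc m + 1) - Vs z (Suc m) - 1" using Suc.IH by (simp add: algebra_simps)
  finally show ?case .
qed

lemma Vs_sum2: "2 * (1 - z^2) * (\<Sum>n\<in>{1..m}. Vs z n ^ 2) = of_nat m + 1 - Vs z (m+1) ^ 2 + z * Vs z (m+1) * Vs z m"
proof (induction m)
  case 0 then show ?case by simp
next
  case (Suc m)
  have c: "Vs z (m+1) ^ 2 - Vs z (m+2) * Vs z m = 1" by (rule Vs_cassini)
  have E0: "Vs z (m+1)^2 - Vs z (m+2)*Vs z m - 1 = 0" using c by simp
  have r: "Vs z (m+2) = 2*z*Vs z (m+1) - Vs z m" by simp
  have id: "2*(1-z^2)*Vs z (m+1)^2 = (of_nat (m+1) + 1 - Vs z (m+2)^2 + z*Vs z (m+2)*Vs z (m+1))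
     - (of_nat m + 1 - Vs z (m+1)^2 + z*Vs z (m+1)*Vs z m) + (Vs z (m+1)^2 - Vs z (m+2)*Vs z m - 1)"
    unfolding r by (simp add: algebra_simps power2_eq_square)
  have "2 * (1 - z^2) * (\<Sum>n\<in>{1..m+1}. Vs z n ^ 2) = 2 * (1 - z^2) * (\<Sum>n\<in>{1..m}. Vs z n ^ 2) + 2*(1-z^2)* Vs z (m+1)^2"
    by (simp add: algebra_simps)
  also have "\<dots> = of_nat (m+1) + 1 - Vs z (m+2) ^ 2 + z * Vs z (m+2) * Vs z (m+1)"
    unfolding Suc.IH id E0 by (simp add: algebra_simps)
  finally show ?case by (simp add: numeral_2_eq_2)
qed

definition Sconv :: "'a::comm_ring_1 \<Rightarrow> nat \<Rightarrow> 'a" where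
  "Sconv z m = (\<Sum>i\<in>{1..m}. Vs z i * Vs z (m+1-i))"

lemma Sconv_rec: "Sconv z (m+2) = 2 * z * Sconv z (m+1) - Sconv z m + Vs z (m+2)"
proof -
  have "Sconv z (m+2) = (\<Sum>i\<in>{1..m+1}. Vs z i * Vs z (m+3-i)) + Vs z (m+2)"
    unfolding Sconv_def by (simp add: numeral_3_eq_3)
  also have "(\<Sum>i\<in>{1..m+1}. Vs z i * Vs z (m+3-i))
      = (\<Sum>i\<in>{1..m+1}. 2*z*(Vs z i * Vs z (m+2-i)) - Vs z i * Vs z (m+1-i))"
  proof (rule sum.cong)
    fix i assume "i \<in> {1..m+1}"
    then have "m+3-i = Suc (Suc (m+1-i))" "m+2-i = Suc (m+1-i)" by auto
    then show "Vs z i * Vs z (m+3-i) = 2*z*(Vs z i * Vs z (m+2-i)) - Vs z i * Vs z (m+1-i)"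
      by (simp add: algebra_simps)
  qed simp
  also have "\<dots> = 2*z*(\<Sum>i\<in>{1..m+1}. Vs z i * Vs z (m+2-i)) - (\<Sum>i\<in>{1..m+1}. Vs z i * Vs z (m+1-i))"
    by (simp only: sum_subtractf sum_distrib_left)
  also have "(\<Sum>i\<in>{1..m+1}. Vs z i * Vs z (m+2-i)) = Sconv z (m+1)"
    unfolding Sconv_def by (simp add: numeral_2_eq_2)
  also have "(\<Sum>i\<in>{1..m+1}. Vs z i * Vs z (m+1-i)) = Sconv z m"
    unfolding Sconv_def by simp
  finally show ?thesis .
qed

lemma Vs_sum3: "2 * (z^2 - 1) * Sconv z m = of_nat m * z * Vs z (m+1) - (of_nat m + 1) * Vs z m"
proof (induction m rule: nat_less_induct)
  case (1 m)
  show ?case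
  proof (cases m)
    case 0 then show ?thesis by (simp add: Sconv_def)
  next
    case (Suc m1)
    show ?thesis
    proof (cases m1)
      case 0 with Suc show ?thesis by (simp add: Sconv_def algebra_simps power2_eq_square)
    next
      case (Suc m2)
      with \<open>m = Suc m1\<close> have m: "m = m2 + 2" by simp
      have h1: "2 * (z^2 - 1) * Sconv z (m2+1) = of_nat (m2+1) * z * Vs z (m2+2) - (of_nat (m2+1) + 1) * Vs z (m2+1)"
        using "1"[rule_format, of "m2+1"] m by simp
      have h0: "2 * (z^2 - 1) * Sconv z m2 = of_nat m2 * z * Vs z (m2+1) - (of_nat m2 + 1) * Vs z m2"
        using "1"[rule_format, of "m2"] m by simp
      have r: "Vs z (m2+3) = 2*z*Vs z (m2+2) - Vs z (m2+1)" "Vs z (m2+2) = 2*z*Vs z (m2+1) - Vs z m2"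
        by (simp_all add: numeral_3_eq_3 numeral_2_eq_2)
      have "2 * (z^2 - 1) * Sconv z (m2+2) = 2*z*(2 * (z^2 - 1) * Sconv z (m2+1)) - 2 * (z^2 - 1) * Sconv z m2 + 2 * (z^2 - 1) *Vs z (m2+2)"
        by (subst Sconv_rec) (simp add: algebra_simps)
      also have "\<dots> = of_nat (m2+2) * z * Vs z (m2+3) - (of_nat (m2+2) + 1) * Vs z (m2+2)"
        unfolding h1 h0 r by (simp add: algebra_simps power2_eq_square)
      finally show ?thesis using m by (simp add: numeral_3_eq_3 add.commute)
    qed
  qed
qed



definition wt :: "'a::comm_semiring_1 \<Rightarrow> nat \<Rightarrow> nat \<Rightarrow> 'a" where
  "wt t i j = (if \<bar>int j - int i\<bar> \<le> 1 then t else 1)"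

fun pw :: "'a::comm_semiring_1 \<Rightarrow> nat \<Rightarrow> nat list \<Rightarrow> 'a" where
  "pw t i [] = 1"
| "pw t i (x # xs) = wt t i x * pw t x xs"

definition Qm :: "'a::comm_semiring_1 \<Rightarrow> nat \<Rightarrow> nat \<Rightarrow> nat \<Rightarrow> nat \<Rightarrow> 'a" where
  "Qm t k n i j = (\<Sum>w\<in>words k n. if last (i # w) = j then pw t i w else 0)"

lemma finite_words: "finite (words k n)"
proof -
  have "words k n = {xs. set xs \<subseteq> {1..k} \<and> length xs = n}" unfolding words_def by auto
  then show ?thesis using finite_lists_length_eq[of "{1..k}" n] by simp
qed

lemma words_0: "words k 0 = {[]}" unfolding words_def by auto

lemma words_Suc: "words k (Suc n) = (\<lambda>(l, w). l # w) ` ({1..k} \<times> words k n)"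
proof
  show "words k (Suc n) \<subseteq> (\<lambda>(l, w). l # w) ` ({1..k} \<times> words k n)"
  proof
    fix v assume "v \<in> words k (Suc n)"
    then obtain l w where v: "v = l # w" and "length w = n" "set v \<subseteq> {1..k}"
      unfolding words_def by (cases v) auto
    then show "v \<in> (\<lambda>(l, w). l # w) ` ({1..k} \<times> words k n)"
      unfolding words_def by (auto intro!: image_eqI[of _ _ "(l,w)"])
  qed
qed (auto simp: words_def)

lemma Qm_0: "Qm t k 0 i j = (if i = j then 1 else 0)"
  unfolding Qm_def words_0 by simp

lemma Qm_Suc: "Qm t k (Suc n) i j = (\<Sum>l\<in>{1..k}. wt t i l * Qm t k n l j)"
proof -
  have inj: "inj_on (\<lambda>(l, w). l # w) ({1..k} \<times> words k n)" by (auto simp: inj_on_def)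
  have "Qm t k (Suc n) i j = (\<Sum>(l,w)\<in>{1..k} \<times> words k n. if last (i # l # w) = j then pw t i (l # w) else 0)"
    unfolding Qm_def words_Suc by (subst sum.reindex[OF inj]) (simp add: case_prod_unfold)
  also have "\<dots> = (\<Sum>l\<in>{1..k}. \<Sum>w\<in>words k n. if last (i # l # w) = j then pw t i (l # w) else 0)"
    by (simp add: sum.cartesian_product)
  also have "\<dots> = (\<Sum>l\<in>{1..k}. \<Sum>w\<in>words k n. wt t i l * (if last (l # w) = j then pw t l w else 0))"
    by (intro sum.cong refl) simp
  also have "\<dots> = (\<Sum>l\<in>{1..k}. wt t i l * Qm t k n l j)"
    unfolding Qm_def by (simp add: sum_distrib_left)
  finally show ?thesis .
qed

lemma pw_prod: "pw t i w = (\<Prod>j<length w. wt t ((i # w) ! j) (w ! j))"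
proof (induction w arbitrary: i)
  case Nil then show ?case by simp
next
  case (Cons x xs)
  show ?case by (simp add: Cons.IH prod.lessThan_Suc_shift del: prod.lessThan_Suc)
qed

lemma cs_pw:
  assumes "w \<noteq> []"
  shows "t ^ cs w = pw t (last w) w"
proof -
  obtain m where n: "length w = Suc m" using assms by (cases w) auto
  let ?P = "\<lambda>i. \<bar>int (w ! ((i + 1) mod length w)) - int (w ! i)\<bar> \<le> 1"
  have "t ^ cs w = t ^ card ({..<length w} \<inter> {i. ?P i})"
    unfolding cs_def by (simp add: lessThan_def Collect_conj_eq)
  also have "\<dots> = (\<Prod>i<length w. if ?P i then t else 1)"
    by (simp add: prod.If_cases)
  also have "\<dots> = (\<Prod>i<length w. wt t (w ! i) (w ! ((i + 1) mod length w)))"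
    unfolding wt_def by simp
  also have "\<dots> = (\<Prod>i<m. wt t (w ! i) (w ! (i + 1))) * wt t (w ! m) (w ! 0)"
    unfolding n by (simp add: prod.lessThan_Suc)
  also have "\<dots> = wt t (last w) (w ! 0) * (\<Prod>i<m. wt t (w ! i) (w ! Suc i))"
    using n assms by (simp add: last_conv_nth mult.commute)
  also have "\<dots> = pw t (last w) w"
    unfolding pw_prod n by (simp add: prod.lessThan_Suc_shift del: prod.lessThan_Suc)
  finally show ?thesis .
qed

lemma comb:
  assumes "n \<ge> 1"
  shows "(\<Sum>w\<in>words k n. t ^ cs w) = (\<Sum>i\<in>{1..k}. Qm t k n i i)"
proof -
  have "(\<Sum>i\<in>{1..k}. Qm t k n i i) = (\<Sum>w\<in>words k n. \<Sum>i\<in>{1..k}. if last w = i then pw t i w else 0)"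
    unfolding Qm_def
    by (subst sum.swap) (rule sum.cong, simp, rule sum.cong, use assms in \<open>auto simp: words_def\<close>)
  also have "\<dots> = (\<Sum>w\<in>words k n. pw t (last w) w)"
  proof (rule sum.cong)
    fix w assume w: "w \<in> words k n"
    then have "w \<noteq> []" using assms unfolding words_def by auto
    then have "last w \<in> set w" by (rule last_in_set)
    then have "last w \<in> {1..k}" using w unfolding words_def by auto
    then show "(\<Sum>i\<in>{1..k}. if last w = i then pw t i w else 0) = pw t (last w) w"
      by simp
  qed simp
  also have "\<dots> = (\<Sum>w\<in>words k n. t ^ cs w)"
  proof (rule sum.cong)
    fix w assume "w \<in> words k n"
    then have "w \<noteq> []" using assms unfolding words_def by auto
    then show "pw t (last w) w = t ^ cs w" by (simp add: cs_pw)
  qed simp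
  finally show ?thesis by simp
qed



lemma fps_to_fls_sum: "fps_to_fls (\<Sum>x\<in>A. f x) = (\<Sum>x\<in>A. fps_to_fls (f x))"
  by (induction A rule: infinite_finite_induct) simp_all

definition Phi :: "'a::field \<Rightarrow> nat \<Rightarrow> nat \<Rightarrow> nat \<Rightarrow> 'a fls" where
  "Phi t k i j = fps_to_fls (Abs_fps (\<lambda>n. Qm t k n i j))"

lemma Phi_fps_eq:
  "Abs_fps (\<lambda>n. Qm t k n i j) = (if i = j then 1 else 0)
     + fps_X * (\<Sum>l\<in>{1..k}. fps_const (wt t i l) * Abs_fps (\<lambda>n. Qm (t::'a::field) k n l j))"
proof (rule fps_ext)
  fix n show "Abs_fps (\<lambda>n. Qm t k n i j) $ n = ((if i = j then 1 else 0)
     + fps_X * (\<Sum>l\<in>{1..k}. fps_const (wt t i l) * Abs_fps (\<lambda>n. Qm t k n l j))) $ n"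
    by (cases n) (simp_all add: Qm_0 Qm_Suc fps_sum_nth)
qed

lemma Phi_eq:
  "Phi t k i j = (if i = j then 1 else 0) + fls_X * (\<Sum>l\<in>{1..k}. fls_const (wt t i l) * Phi t k l j)"
proof -
  have "Phi t k i j = fps_to_fls ((if i = j then 1 else 0)
     + fps_X * (\<Sum>l\<in>{1..k}. fps_const (wt t i l) * Abs_fps (\<lambda>n. Qm (t::'a::field) k n l j)))"
    unfolding Phi_def by (subst Phi_fps_eq) (rule refl)
  also have "\<dots> = (if i = j then 1 else 0) + fls_X * (\<Sum>l\<in>{1..k}. fls_const (wt t i l) * Phi t k l j)"
    by (simp add: fls_times_fps_to_fls fps_to_fls_sum Phi_def)
  finally show ?thesis .
qed

lemma fls_uniq:
  fixes y :: "nat \<Rightarrow> 'a::field fls"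
  assumes fin: "finite I"
    and eq: "\<And>i. i \<in> I \<Longrightarrow> y i = fls_X * (\<Sum>l\<in>I. fls_const (c i l) * y l)"
  shows "\<forall>i\<in>I. y i = 0"
proof (cases "I = {}")
  case True then show ?thesis by simp
next
  case False
  define N where "N = Min ((\<lambda>i. fls_subdegree (y i)) ` I)"
  have below: "\<And>i n. i \<in> I \<Longrightarrow> n < N \<Longrightarrow> fls_nth (y i) n = 0"
  proof -
    fix i n assume i: "i \<in> I" and n: "n < N"
    have "N \<le> fls_subdegree (y i)" unfolding N_def using fin i by simp
    with n show "fls_nth (y i) n = 0" by simp
  qed
  have step: "\<And>d. \<forall>i\<in>I. \<forall>n < N + int d. fls_nth (y i) n = 0"
  proof -
    fix d show "\<forall>i\<in>I. \<forall>n < N + int d. fls_nth (y i) n = 0"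
    proof (induction d)
      case 0 then show ?case using below by simp
    next
      case (Suc d)
      show ?case
      proof (intro ballI allI impI)
        fix i n assume i: "i \<in> I" and n: "n < N + int (Suc d)"
        have "fls_nth (y i) n = fls_nth (\<Sum>l\<in>I. fls_const (c i l) * y l) (n - 1)"
          by (subst eq[OF i]) (simp add: fls_X_times_conv_shift)
        also have "\<dots> = (\<Sum>l\<in>I. c i l * fls_nth (y l) (n - 1))"
          by (simp add: fls_nth_sum)
        also have "\<dots> = 0"
          using Suc.IH n by (intro sum.neutral) auto
        finally show "fls_nth (y i) n = 0" .
      qed
    qed
  qed
  show ?thesis
  proof
    fix i assume i: "i \<in> I"
    show "y i = 0"
    proof (rule fls_eqI)
      fix n
      have "n < N + int (nat (n - N + 1))" by simp
      then show "fls_nth (y i) n = fls_nth 0 n" using step[of "nat (n - N + 1)"] i by simp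
    qed
  qed
qed

lemma Gk_Phi: "fps_to_fls (Gk k) = 1 - of_nat k + (\<Sum>i\<in>{1..k}. Phi tvar k i i)"
proof -
  have "Gk k = 1 - of_nat k + (\<Sum>i\<in>{1..k}. Abs_fps (\<lambda>n. Qm tvar k n i i))"
  proof (rule fps_ext)
    fix n
    show "Gk k $ n = (1 - of_nat k + (\<Sum>i\<in>{1..k}. Abs_fps (\<lambda>n. Qm tvar k n i i))) $ n"
    proof (cases n)
      case 0
      have "Gk k $ 0 = 1" unfolding Gk_def by (simp add: words_0 cs_def)
      moreover have "(1 - of_nat k + (\<Sum>i\<in>{1..k}. Abs_fps (\<lambda>n. Qm tvar k n i i))) $ 0 = 1"
        by (simp add: fps_sum_nth Qm_0 fps_of_nat)
      ultimately show ?thesis using 0 by simp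
    next
      case (Suc m)
      then have "Gk k $ n = (\<Sum>i\<in>{1..k}. Qm tvar k n i i)"
        unfolding Gk_def by (simp add: comb)
      then show ?thesis using Suc by (simp add: fps_sum_nth fps_of_nat)
    qed
  qed
  then show ?thesis by (simp add: fps_to_fls_sum Phi_def)
qed



definition Cm :: "'a::field \<Rightarrow> nat \<Rightarrow> nat \<Rightarrow> nat \<Rightarrow> 'a" where
  "Cm z k i j = (if i \<le> j then Vs z i * Vs z (k+1-j) else Vs z j * Vs z (k+1-i)) / Vs z (k+1)"

lemma Cm_sym: "Cm z k i j = Cm z k j i"
  unfolding Cm_def by (auto simp: mult.commute)

lemma Vs_rec: "n \<ge> 1 \<Longrightarrow> Vs z (n+1) = 2*z*Vs z n - Vs z (n-1)"
  by (cases n) (auto simp: numeral_2_eq_2)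

lemma close_sum:
  assumes i: "i \<in> {1..k}"
  shows "(\<Sum>l\<in>{1..k}. (if \<bar>int l - int i\<bar> \<le> 1 then g l else 0)) =
         g i + (if 1 < i then g (i-1) else 0) + (if i < k then g (i+1) else (0::'a::comm_monoid_add))"
proof -
  have "(\<Sum>l\<in>{1..k}. (if \<bar>int l - int i\<bar> \<le> 1 then g l else 0)) =
        (\<Sum>l\<in>{1..k}. (if l = i then g l else 0) + (if 1 < i then (if l = i - 1 then g l else 0) else 0)
             + (if i < k then (if l = i + 1 then g l else 0) else 0))"
  proof (rule sum.cong)
    fix l assume l: "l \<in> {1..k}"
    show "(if \<bar>int l - int i\<bar> \<le> 1 then g l else 0) = (if l = i then g l else 0) + (if 1 < i then (if l = i - 1 then g l else 0) else 0)
             + (if i < k then (if l = i + 1 then g l else 0) else 0)"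
      using i l by (cases "l = i"; cases "l = i - 1"; cases "l = i + 1") auto
  qed simp
  also have "\<dots> = g i + (if 1 < i then g (i-1) else 0) + (if i < k then g (i+1) else 0)"
    using i by (auto simp: sum.distrib)
  finally show ?thesis .
qed

lemma Cm_guard1: "j \<ge> 1 \<Longrightarrow> i \<ge> 1 \<Longrightarrow> (if 1 < i then Cm z k (i-1) j else 0) = Cm z k (i-1) j"
  unfolding Cm_def by auto

lemma Cm_guard2: "j \<le> k \<Longrightarrow> i \<le> k \<Longrightarrow> (if i < k then Cm z k (i+1) j else 0) = Cm z k (i+1) j"
  unfolding Cm_def by auto

lemma comb3: "(u::'a::field) \<noteq> 0 \<Longrightarrow> 2*z*(A/u) - B/u - C/u = (2*z*A - B - C)/u"
  by (simp add: field_simps)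

lemma Cm_inv:
  assumes i: "i \<in> {1..k}" and j: "j \<in> {1..k}" and u: "Vs z (k+1) \<noteq> 0"
  shows "2*z*Cm z k i j - Cm z k (i-1) j - Cm z k (i+1) j = (if i = j then 1 else 0)"
proof -
  let ?u = "Vs z (k+1)"
  consider "i < j" | "i = j" | "j < i" by arith
  then show ?thesis
  proof cases
    case 1
    have r: "Vs z (i+1) = 2*z*Vs z i - Vs z (i-1)" using i by (intro Vs_rec) simp
    have c: "Cm z k i j = (Vs z i * Vs z (k+1-j)) / ?u" "Cm z k (i-1) j = (Vs z (i-1) * Vs z (k+1-j)) / ?u"
       "Cm z k (i+1) j = (Vs z (i+1) * Vs z (k+1-j)) / ?u" using 1 unfolding Cm_def by auto
    have "2*z*Cm z k i j - Cm z k (i-1) j - Cm z k (i+1) j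
        = Vs z (k+1-j) * (2*z*Vs z i - Vs z (i-1) - Vs z (i+1)) / ?u"
      unfolding c comb3[OF u] by (simp add: algebra_simps)
    also have "\<dots> = 0" unfolding r by simp
    finally show ?thesis using 1 by simp
  next
    case 2
    have e: "Vs z (i+1) * Vs z (k-i+1) - Vs z i * Vs z (k-i) = Vs z (i + (k-i) + 1)" by (rule Vs_add)
    have e2: "i + (k-i) + 1 = k+1" "k - i + 1 = k + 1 - i" using i by auto
    have r: "Vs z (i+1) = 2*z*Vs z i - Vs z (i-1)" using i by (intro Vs_rec) simp
    have c: "Cm z k i j = (Vs z i * Vs z (k+1-i)) / ?u" "Cm z k (i-1) j = (Vs z (i-1) * Vs z (k+1-i)) / ?u"
       "Cm z k (i+1) j = (Vs z i * Vs z (k-i)) / ?u" using 2 unfolding Cm_def by auto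
    have "2*z*Cm z k i j - Cm z k (i-1) j - Cm z k (i+1) j
        = (Vs z (k+1-i) * (2*z*Vs z i - Vs z (i-1)) - Vs z i * Vs z (k-i)) / ?u"
      unfolding c comb3[OF u] by (simp add: algebra_simps)
    also have "\<dots> = 1" using e u unfolding e2 r by (simp add: mult.commute)
    finally show ?thesis using 2 by simp
  next
    case 3
    have r: "Vs z (k+1-i+1) = 2*z*Vs z (k+1-i) - Vs z (k+1-i-1)" using i by (intro Vs_rec) auto
    have e: "k+1-i+1 = k+1-(i-1)" "k+1-i-1 = k+1-(i+1)" using i 3 by auto
    have c2: "Cm z k (i-1) j = (Vs z j * Vs z (k+1-(i-1))) / ?u"
    proof (cases "j = i - 1")
      case True then show ?thesis unfolding Cm_def by (simp add: mult.commute)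
    next
      case False then show ?thesis using 3 unfolding Cm_def by auto
    qed
    have c: "Cm z k i j = (Vs z j * Vs z (k+1-i)) / ?u" "Cm z k (i-1) j = (Vs z j * Vs z (k+1-(i-1))) / ?u"
       "Cm z k (i+1) j = (Vs z j * Vs z (k+1-(i+1))) / ?u" using 3 c2 unfolding Cm_def by auto
    have "2*z*Cm z k i j - Cm z k (i-1) j - Cm z k (i+1) j
        = Vs z j * (2*z*Vs z (k+1-i) - Vs z (k+1-(i-1)) - Vs z (k+1-(i+1))) / ?u"
      unfolding c comb3[OF u] by (simp add: algebra_simps)
    also have "\<dots> = 0" using r unfolding e by simp
    finally show ?thesis using 3 by simp
  qed
qed

lemma sum_rev_shift:
  assumes "i \<le> k"
  shows "(\<Sum>j\<in>{i+1..k}. g (k+1-j)) = (\<Sum>n\<in>{1..k-i}. (g::nat\<Rightarrow>'a::comm_monoid_add) n)"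
  by (rule sum.reindex_bij_witness[where i="\<lambda>n. k+1-n" and j="\<lambda>j. k+1-j"]) (use assms in auto)

lemma Cm_rowsum:
  fixes z :: "'a::field"
  assumes i: "i \<in> {1..k}" and u: "Vs z (k+1) \<noteq> 0"
  shows "2*(z-1)*Vs z (k+1)*(\<Sum>j\<in>{1..k}. Cm z k i j) = Vs z (k+1) - Vs z (k+1-i) - Vs z i"
proof -
  let ?u = "Vs z (k+1)"
  have split: "{1..k} = {1..i} \<union> {i+1..k}" using i by auto
  have s1: "(\<Sum>j\<in>{1..i}. Cm z k i j) = Vs z (k+1-i) * (\<Sum>j\<in>{1..i}. Vs z j) / ?u"
    unfolding sum_distrib_left sum_divide_distrib
    by (rule sum.cong) (auto simp: Cm_def mult.commute)
  have s2: "(\<Sum>j\<in>{i+1..k}. Cm z k i j) = Vs z i * (\<Sum>n\<in>{1..k-i}. Vs z n) / ?u"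
  proof -
    have "(\<Sum>j\<in>{i+1..k}. Cm z k i j) = Vs z i * (\<Sum>j\<in>{i+1..k}. Vs z (k+1-j)) / ?u"
      unfolding sum_distrib_left sum_divide_distrib
      by (rule sum.cong) (auto simp: Cm_def)
    moreover have "(\<Sum>j\<in>{i+1..k}. Vs z (k+1-j)) = (\<Sum>n\<in>{1..k-i}. Vs z n)"
      by (rule sum_rev_shift) (use i in auto)
    ultimately show ?thesis by simp
  qed
  have h1: "2*(z-1)*(\<Sum>j\<in>{1..i}. Vs z j) = Vs z (i+1) - Vs z i - 1" by (rule Vs_sum1)
  have h2: "2*(z-1)*(\<Sum>n\<in>{1..k-i}. Vs z n) = Vs z (k-i+1) - Vs z (k-i) - 1" by (rule Vs_sum1)
  have e: "Vs z (i+1) * Vs z (k-i+1) - Vs z i * Vs z (k-i) = Vs z (i + (k-i) + 1)" by (rule Vs_add)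
  have e2: "i + (k-i) + 1 = k+1" "k - i + 1 = k + 1 - i" using i by auto
  have "2*(z-1)*?u*(\<Sum>j\<in>{1..k}. Cm z k i j) = 2*(z-1)*?u*((\<Sum>j\<in>{1..i}. Cm z k i j) + (\<Sum>j\<in>{i+1..k}. Cm z k i j))"
    by (subst split, subst sum.union_disjoint) auto
  also have "\<dots> = Vs z (k+1-i) * (2*(z-1)*(\<Sum>j\<in>{1..i}. Vs z j)) + Vs z i * (2*(z-1)*(\<Sum>n\<in>{1..k-i}. Vs z n))"
    unfolding s1 s2 using u by (simp add: field_simps)
  also have "\<dots> = Vs z (k+1-i) * (Vs z (i+1) - Vs z i - 1) + Vs z i * (Vs z (k+1-i) - Vs z (k-i) - 1)"
    unfolding h1 h2 e2 ..
  also have "\<dots> = (Vs z (i+1) * Vs z (k+1-i) - Vs z i * Vs z (k-i)) - Vs z (k+1-i) - Vs z i"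
    by (simp add: algebra_simps)
  also have "\<dots> = ?u - Vs z (k+1-i) - Vs z i"
    using e unfolding e2 by simp
  finally show ?thesis .
qed

lemma Cm_diag: "(\<Sum>i\<in>{1..k}. Cm z k i i) = Sconv z k / Vs z (k+1)"
  unfolding Sconv_def Cm_def sum_divide_distrib by simp



lemma final_core:
  fixes a X u w K p q r N :: "'a::field_char_0"
  assumes a: "a \<noteq> 0" and u: "u \<noteq> 0" and h1: "p \<noteq> 0" and h2: "q \<noteq> 0" and h3: "r \<noteq> 0"
    and N: "N \<noteq> 0"
  and hp: "p = 1 - 3*a" and hq: "q = 1 + a" and hr: "r = 1 + 3*a"
  and hN: "N = p^2*u - X*(K*p*u - 2*a*(u-w-1))"
  shows "1 - K + (a*(K*(1-a)*u - 2*a*(K+1)*w)/(p*q))/(a*u) + X/(N/(p^2*u)) *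
     ((K*u^2 - 4*u*(a*(u-w-1)/p) + 2*(- a*(2*a*(K+1-u^2) + (1-a)*u*w)/(p*q)) + 2*(a*(K*(1-a)*u - 2*a*(K+1)*w)/(p*q)))/((p/a)*u*a)^2) =
    1 + r / (p * q) *
      ( 1 / (N/(p^2*u))
        - (2 * a * (K + 1)) / (r * u)
          * ( (1 - X * ((1 + K - u) / p)) / (N/(p^2*u))
              + w - 1)
        + K * a - 1)"
proof -
  have "1 - K + (a*(K*(1-a)*u - 2*a*(K+1)*w)/(p*q))/(a*u) + X/(N/(p^2*u)) *
     ((K*u^2 - 4*u*(a*(u-w-1)/p) + 2*(- a*(2*a*(K+1-u^2) + (1-a)*u*w)/(p*q)) + 2*(a*(K*(1-a)*u - 2*a*(K+1)*w)/(p*q)))/((p/a)*u*a)^2)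
   = ((1-K)*p*q*u*N + (K*(1-a)*u - 2*a*(K+1)*w)*N + X*(K*u^2*p*q - 4*u*a*(u-w-1)*q - 2*a*(2*a*(K+1-u^2) + (1-a)*u*w) + 2*a*(K*(1-a)*u - 2*a*(K+1)*w))) / (p*q*u*N)"
    using a u h1 h2 h3 N by (simp add: field_simps power2_eq_square)
  also have "\<dots> = 1 + r / (p * q) *
      ( 1 / (N/(p^2*u))
        - (2 * a * (K + 1)) / (r * u)
          * ( (1 - X * ((1 + K - u) / p)) / (N/(p^2*u))
              + w - 1)
        + K * a - 1)"
  proof -
    have e: "1 + r / (p * q) *
      ( 1 / (N/(p^2*u))
        - (2 * a * (K + 1)) / (r * u)
          * ( (1 - X * ((1 + K - u) / p)) / (N/(p^2*u))
              + w - 1)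
        + K * a - 1) = (p*q*u*N + r*p^2*u*u - 2*a*(K+1)*(p*u*(p - X*(1+K-u)) + (w-1)*N) + (K*a-1)*r*u*N)/(p*q*u*N)"
      using a u h1 h2 h3 N by (simp add: field_simps power2_eq_square)
    have "(1-K)*p*q*u*N + (K*(1-a)*u - 2*a*(K+1)*w)*N + X*(K*u^2*p*q - 4*u*a*(u-w-1)*q - 2*a*(2*a*(K+1-u^2) + (1-a)*u*w) + 2*a*(K*(1-a)*u - 2*a*(K+1)*w))
        = p*q*u*N + r*p^2*u*u - 2*a*(K+1)*(p*u*(p - X*(1+K-u)) + (w-1)*N) + (K*a-1)*r*u*N"
      unfolding hN hp hq hr by (simp add: algebra_simps power2_eq_square)
    then show ?thesis unfolding e by simp
  qed
  finally show ?thesis .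
qed

lemma final_core2:
  fixes a X u w K p q r g S1 S2 S :: "'a::field_char_0"
  assumes a: "a \<noteq> 0" and u: "u \<noteq> 0" and h1: "p \<noteq> 0" and h2: "q \<noteq> 0" and h3: "r \<noteq> 0"
  and hp: "p = 1 - 3*a" and hq: "q = 1 + a" and hr: "r = 1 + 3*a"
  and g: "g = K/p - (2*a)/p^2 * ((u - w - 1)/u)"
  and D: "1 - X*g \<noteq> 0"
  and S1: "S1 = a*(u-w-1)/p"
  and S2: "S2 = - a*(2*a*(K+1-u^2) + (1-a)*u*w)/(p*q)"
  and S: "S = a*(K*(1-a)*u - 2*a*(K+1)*w)/(p*q)"
  shows "1 - K + S/(a*u) + X/(1-X*g) * ((K*u^2 - 4*u*S1 + 2*S2 + 2*S)/((p/a)*u*a)^2) =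
    1 + r / (p * q) *
      ( 1 / (1 - X * g)
        - (2 * a * (K + 1)) / (r * u)
          * ( (1 - X * ((1 + K - u) / p)) / (1 - X * g)
              + w - 1)
        + K * a - 1)"
proof -
  define N where "N = p^2*u - X*(K*p*u - 2*a*(u-w-1))"
  have nz: "p^2 \<noteq> 0" "p^2*u \<noteq> 0" using h1 u by auto
  have gg: "1 - X*g = N/(p^2*u)"
    unfolding g N_def using h1 u nz by (simp add: field_simps) (simp add: eval_nat_numeral algebra_simps)
  have N: "N \<noteq> 0" using D unfolding gg by auto
  show ?thesis unfolding gg S1 S2 S
    by (rule final_core[OF a u h1 h2 h3 N hp hq hr N_def])
qed



definition Bm :: "'a::field \<Rightarrow> 'a \<Rightarrow> nat \<Rightarrow> nat \<Rightarrow> nat \<Rightarrow> 'a" where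
  "Bm a z k i j = Cm z k i j / a"
definition Rv :: "'a::field \<Rightarrow> 'a \<Rightarrow> nat \<Rightarrow> nat \<Rightarrow> 'a" where
  "Rv a z k i = (\<Sum>j\<in>{1..k}. Bm a z k i j)"
definition sg :: "'a::field \<Rightarrow> 'a \<Rightarrow> nat \<Rightarrow> 'a" where
  "sg a z k = (\<Sum>i\<in>{1..k}. Rv a z k i)"
definition Fm :: "'a::field \<Rightarrow> 'a \<Rightarrow> 'a \<Rightarrow> nat \<Rightarrow> nat \<Rightarrow> nat \<Rightarrow> 'a" where
  "Fm X a z k i j = Bm a z k i j + X * Rv a z k i * Rv a z k j / (1 - X * sg a z k)"

abbreviation dl :: "nat \<Rightarrow> nat \<Rightarrow> 'a::field" where
  "dl i l \<equiv> (if i = l then 1 else 0)"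
abbreviation cl :: "'a::field \<Rightarrow> nat \<Rightarrow> nat \<Rightarrow> 'a" where
  "cl a i l \<equiv> (if \<bar>int l - int i\<bar> \<le> 1 then a else 0)"

lemma dl_sum:
  assumes "finite S"
  shows "(\<Sum>l\<in>S. (if i = l then 1 else 0) * f l) = (if i \<in> S then f i else (0::'a::field))"
proof -
  have "(\<Sum>l\<in>S. (if i = l then 1 else 0) * f l) = (\<Sum>l\<in>S. (if i = l then f l else 0))"
    by (rule sum.cong) simp_all
  then show ?thesis using assms by simp
qed

lemma dmc: "(D::'a::field) \<noteq> 0 \<Longrightarrow> x / D * D = x" by simp

lemma Cm_0 [simp]: "Cm z k 0 j = 0"
  by (simp add: Cm_def)

lemma AB:
  fixes a z :: "'a::field"
  assumes i: "i \<in> {1..k}" and j: "j \<in> {1..k}" and u: "Vs z (k+1) \<noteq> 0"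
    and a: "a \<noteq> 0" and za: "2*z*a = 1 - a"
  shows "(\<Sum>l\<in>{1..k}. (dl i l - cl a i l) * Bm a z k l j) = dl i j"
proof -
  have "(\<Sum>l\<in>{1..k}. (dl i l - cl a i l) * Bm a z k l j)
      = (\<Sum>l\<in>{1..k}. dl i l * Bm a z k l j) - (\<Sum>l\<in>{1..k}. (if \<bar>int l - int i\<bar> \<le> 1 then Cm z k l j else 0))"
    unfolding sum_subtractf[symmetric] using a by (intro sum.cong) (auto simp: Bm_def algebra_simps)
  also have "(\<Sum>l\<in>{1..k}. dl i l * Bm a z k l j) = Bm a z k i j"
    using i by (simp add: dl_sum)
  also have "(\<Sum>l\<in>{1..k}. (if \<bar>int l - int i\<bar> \<le> 1 then Cm z k l j else 0))
      = Cm z k i j + Cm z k (i-1) j + Cm z k (i+1) j"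
    using i j by (subst close_sum[OF i]) (simp add: Cm_guard1 Cm_guard2)
  also have "Bm a z k i j - (Cm z k i j + Cm z k (i-1) j + Cm z k (i+1) j)
      = 2*z*Cm z k i j - Cm z k (i-1) j - Cm z k (i+1) j"
  proof -
    have "Bm a z k i j - Cm z k i j = Cm z k i j * (1 - a) / a"
      unfolding Bm_def using a by (simp add: field_simps)
    also have "\<dots> = Cm z k i j * (2*z*a) / a" unfolding za ..
    also have "\<dots> = 2*z*Cm z k i j" using a by simp
    finally have "Bm a z k i j - Cm z k i j = 2*z*Cm z k i j" .
    then show ?thesis by (simp add: algebra_simps)
  qed
  also have "\<dots> = dl i j" using Cm_inv[OF i j u] .
  finally show ?thesis .
qed

lemma wtX:
  fixes X T :: "'a::field"
  shows "X * wt T i l = X + cl (X*(T-1)) i l"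
  unfolding wt_def by (simp add: algebra_simps)

lemma lin:
  fixes X T :: "'a::field"
  assumes i: "i \<in> {1..k}"
  shows "v i - X * (\<Sum>l\<in>{1..k}. wt T i l * v l)
       = (\<Sum>l\<in>{1..k}. (dl i l - cl (X*(T-1)) i l) * v l) - X * (\<Sum>l\<in>{1..k}. v l)"
proof -
  have "X * (\<Sum>l\<in>{1..k}. wt T i l * v l) = (\<Sum>l\<in>{1..k}. (X * wt T i l) * v l)"
    by (simp add: sum_distrib_left mult.assoc)
  also have "\<dots> = X * (\<Sum>l\<in>{1..k}. v l) + (\<Sum>l\<in>{1..k}. cl (X*(T-1)) i l * v l)"
    unfolding wtX by (simp add: distrib_right sum.distrib sum_distrib_left)
  finally have e: "X * (\<Sum>l\<in>{1..k}. wt T i l * v l) = X * (\<Sum>l\<in>{1..k}. v l) + (\<Sum>l\<in>{1..k}. cl (X*(T-1)) i l * v l)" .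
  have d: "(\<Sum>l\<in>{1..k}. dl i l * v l) = v i"
    using i by (simp add: dl_sum)
  have "(\<Sum>l\<in>{1..k}. (dl i l - cl (X*(T-1)) i l) * v l) = (\<Sum>l\<in>{1..k}. dl i l * v l) - (\<Sum>l\<in>{1..k}. cl (X*(T-1)) i l * v l)"
    by (simp add: left_diff_distrib sum_subtractf)
  then show ?thesis unfolding e d by simp
qed

lemma AR:
  fixes a z :: "'a::field"
  assumes i: "i \<in> {1..k}" and u: "Vs z (k+1) \<noteq> 0"
    and a: "a \<noteq> 0" and za: "2*z*a = 1 - a"
  shows "(\<Sum>l\<in>{1..k}. (dl i l - cl a i l) * Rv a z k l) = 1"
proof -
  have "(\<Sum>l\<in>{1..k}. (dl i l - cl a i l) * Rv a z k l)
      = (\<Sum>m\<in>{1..k}. \<Sum>l\<in>{1..k}. (dl i l - cl a i l) * Bm a z k l m)"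
    unfolding Rv_def sum_distrib_left by (rule sum.swap)
  also have "\<dots> = (\<Sum>m\<in>{1..k}. dl i m)"
    by (rule sum.cong) (use AB[OF i _ u a za] in auto)
  also have "\<dots> = 1" using i by simp
  finally show ?thesis .
qed

lemma colsum: "(\<Sum>l\<in>{1..k}. Bm a z k l j) = Rv a z k j"
  unfolding Rv_def Bm_def by (intro sum.cong refl) (subst Cm_sym, rule refl)

lemma Req:
  fixes X T z :: "'a::field"
  assumes i: "i \<in> {1..k}" and u: "Vs z (k+1) \<noteq> 0"
    and a: "X*(T-1) \<noteq> 0" and za: "2*z*(X*(T-1)) = 1 - X*(T-1)"
  shows "Rv (X*(T-1)) z k i - X * (\<Sum>l\<in>{1..k}. wt T i l * Rv (X*(T-1)) z k l) = 1 - X * sg (X*(T-1)) z k"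
  unfolding lin[OF i] AR[OF i u a za] sg_def ..

lemma Feq:
  fixes X T z :: "'a::field"
  assumes i: "i \<in> {1..k}" and j: "j \<in> {1..k}" and u: "Vs z (k+1) \<noteq> 0"
    and a: "X*(T-1) \<noteq> 0" and za: "2*z*(X*(T-1)) = 1 - X*(T-1)"
    and D: "1 - X * sg (X*(T-1)) z k \<noteq> 0"
  shows "Fm X (X*(T-1)) z k i j - X * (\<Sum>l\<in>{1..k}. wt T i l * Fm X (X*(T-1)) z k l j) = dl i j"
proof -
  let ?a = "X*(T-1)"
  let ?D = "1 - X * sg ?a z k"
  let ?c = "X * Rv ?a z k j / ?D"
  have F: "\<And>l. Fm X ?a z k l j = Bm ?a z k l j + ?c * Rv ?a z k l"
    unfolding Fm_def by (simp add: field_simps)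
  have s1: "(\<Sum>l\<in>{1..k}. (dl i l - cl ?a i l) * Fm X ?a z k l j)
     = (\<Sum>l\<in>{1..k}. (dl i l - cl ?a i l) * Bm ?a z k l j) + ?c * (\<Sum>l\<in>{1..k}. (dl i l - cl ?a i l) * Rv ?a z k l)"
    unfolding F by (simp add: distrib_left sum.distrib sum_distrib_left mult.left_commute)
  have s2: "(\<Sum>l\<in>{1..k}. Fm X ?a z k l j) = Rv ?a z k j + ?c * sg ?a z k"
    unfolding F sum.distrib sum_distrib_left[symmetric] colsum sg_def ..
  have "Fm X ?a z k i j - X * (\<Sum>l\<in>{1..k}. wt T i l * Fm X ?a z k l j)
      = (\<Sum>l\<in>{1..k}. (dl i l - cl ?a i l) * Fm X ?a z k l j) - X * (\<Sum>l\<in>{1..k}. Fm X ?a z k l j)"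
    by (rule lin[OF i])
  also have "\<dots> = dl i j + ?c - X * (Rv ?a z k j + ?c * sg ?a z k)"
    unfolding s1 s2 AB[OF i j u a za] AR[OF i u a za] by simp
  also have "\<dots> = dl i j"
  proof -
    have c1: "?c * ?D = X * Rv ?a z k j" by (rule dmc[OF D])
    have g: "\<And>cc::'a. cc - X * (Rv ?a z k j + cc * sg ?a z k) = cc * ?D - X * Rv ?a z k j"
      by (simp add: algebra_simps)
    have "?c - X * (Rv ?a z k j + ?c * sg ?a z k) = ?c * ?D - X * Rv ?a z k j"
      by (rule g)
    also have "\<dots> = 0" unfolding c1 by simp
    finally have "?c - X * (Rv ?a z k j + ?c * sg ?a z k) = 0" .
    then show ?thesis unfolding add_diff_eq[symmetric] by (simp only: add_0_right)
  qed
  finally show ?thesis .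
qed

fun qq :: "'a::comm_ring_1 fps \<Rightarrow> nat \<Rightarrow> 'a fps" where
  "qq A 0 = 1"
| "qq A (Suc 0) = 1 - A"
| "qq A (Suc (Suc n)) = (1 - A) * qq A (Suc n) - A^2 * qq A n"

lemma qq_0: "A $ 0 = 0 \<Longrightarrow> qq A n $ 0 = 1"
  by (induction A n rule: qq.induct) (simp_all add: power2_eq_square)

lemma qq_fls:
  fixes z :: "'a::field fls"
  assumes A: "fps_to_fls A = a" and za: "2*z*a = 1 - a"
  shows "fps_to_fls (qq A n) = a^n * Vs z (n+1)"
proof -
  have "fps_to_fls (qq A n) = a^n * Vs z (n+1) \<and> fps_to_fls (qq A (Suc n)) = a^(Suc n) * Vs z (Suc n+1)"
  proof (induction n)
    case 0 then show ?case using A za by (simp add: mult.commute)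
  next
    case (Suc n)
    have "fps_to_fls (qq A (Suc (Suc n))) = (1 - a) * (a^(n+1) * Vs z (n+2)) - a^2 * (a^n * Vs z (n+1))"
      using Suc A by (simp add: fls_times_fps_to_fls fps_to_fls_power)
    also have "\<dots> = a^(n+2) * (2*z*Vs z (n+2) - Vs z (n+1))"
      unfolding za[symmetric] by (simp add: algebra_simps power2_eq_square)
    also have "\<dots> = a^(Suc (Suc n)) * Vs z (Suc (Suc n) + 1)"
      by (simp add: numeral_2_eq_2)
    finally show ?case using Suc by simp
  qed
  then show ?thesis by simp
qed



lemma RvC:
  fixes z a :: "'a::field"
  assumes i: "i \<in> {1..k}" and u: "Vs z (k+1) \<noteq> 0" and a: "a \<noteq> 0" and z1: "2*(z-1) \<noteq> 0"
  shows "Rv a z k i = (Vs z (k+1) - Vs z (k+1-i) - Vs z i) / (2*(z-1)*Vs z (k+1)*a)"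
proof -
  have "Rv a z k i = (\<Sum>j\<in>{1..k}. Cm z k i j) / a"
    unfolding Rv_def Bm_def sum_divide_distrib ..
  also have "(\<Sum>j\<in>{1..k}. Cm z k i j) = (Vs z (k+1) - Vs z (k+1-i) - Vs z i) / (2*(z-1)*Vs z (k+1))"
    using Cm_rowsum[OF i u] u z1 by (simp add: field_simps)
  finally show ?thesis using a by (simp add: field_simps)
qed

lemma rev_sum: "(\<Sum>i\<in>{1..k}. g (k+1-i)) = (\<Sum>i\<in>{1..k}. (g::nat \<Rightarrow> 'a::comm_monoid_add) i)"
  using sum.atLeastAtMost_rev[of g 1 k] by (simp add: add.commute)

lemma sgC:
  fixes z a :: "'a::field"
  assumes u: "Vs z (k+1) \<noteq> 0" and a: "a \<noteq> 0" and z1: "2*(z-1) \<noteq> 0"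
  shows "sg a z k = (of_nat k * Vs z (k+1) - 2 * (\<Sum>i\<in>{1..k}. Vs z i)) / (2*(z-1)*Vs z (k+1)*a)"
proof -
  have "sg a z k = (\<Sum>i\<in>{1..k}. (Vs z (k+1) - Vs z (k+1-i) - Vs z i)) / (2*(z-1)*Vs z (k+1)*a)"
    unfolding sg_def sum_divide_distrib using RvC[OF _ u a z1] by (intro sum.cong) auto
  also have "(\<Sum>i\<in>{1..k}. (Vs z (k+1) - Vs z (k+1-i) - Vs z i)) = of_nat k * Vs z (k+1) - 2 * (\<Sum>i\<in>{1..k}. Vs z i)"
    by (simp only: sum_subtractf rev_sum[of "Vs z"]) simp
  finally show ?thesis .
qed

lemma sqC:
  fixes z a :: "'a::field"
  assumes u: "Vs z (k+1) \<noteq> 0" and a: "a \<noteq> 0" and z1: "2*(z-1) \<noteq> 0"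
  shows "(\<Sum>i\<in>{1..k}. Rv a z k i * Rv a z k i) =
     (of_nat k * Vs z (k+1)^2 - 4 * Vs z (k+1) * (\<Sum>i\<in>{1..k}. Vs z i) + 2 * (\<Sum>i\<in>{1..k}. Vs z i ^ 2) + 2 * Sconv z k)
      / (2*(z-1)*Vs z (k+1)*a)^2"
proof -
  let ?u = "Vs z (k+1)"
  have "(\<Sum>i\<in>{1..k}. Rv a z k i * Rv a z k i) = (\<Sum>i\<in>{1..k}. (?u - Vs z (k+1-i) - Vs z i)^2) / (2*(z-1)*?u*a)^2"
    unfolding sum_divide_distrib using RvC[OF _ u a z1] by (intro sum.cong) (auto simp: power2_eq_square)
  also have "(\<Sum>i\<in>{1..k}. (?u - Vs z (k+1-i) - Vs z i)^2)
     = (\<Sum>i\<in>{1..k}. ?u^2 + Vs z (k+1-i)^2 + Vs z i^2 - 2*?u*Vs z (k+1-i) - 2*?u*Vs z i + 2*(Vs z i * Vs z (k+1-i)))"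
    by (intro sum.cong) (auto simp: power2_eq_square algebra_simps)
  also have "\<dots> = of_nat k * ?u^2 + (\<Sum>i\<in>{1..k}. Vs z (k+1-i)^2) + (\<Sum>i\<in>{1..k}. Vs z i^2)
      - 2*?u*(\<Sum>i\<in>{1..k}. Vs z (k+1-i)) - 2*?u*(\<Sum>i\<in>{1..k}. Vs z i) + 2*Sconv z k"
    unfolding Sconv_def by (simp add: sum.distrib sum_subtractf sum_distrib_left)
  also have "\<dots> = of_nat k * ?u^2 - 4 * ?u * (\<Sum>i\<in>{1..k}. Vs z i) + 2 * (\<Sum>i\<in>{1..k}. Vs z i ^ 2) + 2 * Sconv z k"
    using rev_sum[of "\<lambda>i. Vs z i ^ 2" k] rev_sum[of "Vs z" k] by simp
  finally show ?thesis .
qed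

lemma diagC:
  fixes z a :: "'a::field"
  shows "(\<Sum>i\<in>{1..k}. Bm a z k i i) = Sconv z k / (Vs z (k+1) * a)"
  unfolding Bm_def sum_divide_distrib[symmetric] Cm_diag by simp



lemma zfacts:
  fixes a z :: "'a::field_char_0"
  assumes a: "a \<noteq> 0" and z: "z = (1-a)/(2*a)"
  shows "2*(z-1) = (1-3*a)/a" "2*(1-z^2) = -((1-3*a)*(1+a))/(2*a^2)"
    "2*(z^2-1) = ((1-3*a)*(1+a))/(2*a^2)" "2*z*a = 1-a"
  using a unfolding z by (simp_all add: field_simps power2_eq_square)

lemma closed_forms:
  fixes a z u w K S1 S2 S :: "'a::field_char_0"
  assumes a: "a \<noteq> 0" and z: "z = (1-a)/(2*a)" and p: "1 - 3*a \<noteq> 0" and q: "1 + a \<noteq> 0"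
    and e1: "2*(z-1)*S1 = u - w - 1"
    and e2: "2*(1-z^2)*S2 = K + 1 - u^2 + z*u*w"
    and e3: "2*(z^2-1)*S = K*z*u - (K+1)*w"
  shows "S1 = a*(u-w-1)/(1-3*a)"
    "S2 = - a*(2*a*(K+1-u^2) + (1-a)*u*w)/((1-3*a)*(1+a))"
    "S = a*(K*(1-a)*u - 2*a*(K+1)*w)/((1-3*a)*(1+a))"
proof -
  note zf = zfacts[OF a z]
  have pq: "(1-3*a)*(1+a) \<noteq> 0" using p q by simp
  from e1 have "S1 = (u - w - 1)/((1-3*a)/a)" unfolding zf using a p by (simp add: field_simps)
  then show "S1 = a*(u-w-1)/(1-3*a)" using a p by (simp add: field_simps)
  have hd: "\<And>x c d::'a. d \<noteq> 0 \<Longrightarrow> x / (-c/d) = -(x*d)/c" "\<And>x c d::'a. d \<noteq> 0 \<Longrightarrow> x / (c/d) = (x*d)/c"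
    by (simp_all add: field_simps)
  have a2: "2*a^2 \<noteq> 0" using a by simp
  have sv: "\<And>c x y::'a. c \<noteq> 0 \<Longrightarrow> c*x = y \<Longrightarrow> x = y/c" by (simp add: field_simps)
  have c2: "2*(1-z^2) \<noteq> 0" "2*(z^2-1) \<noteq> 0" unfolding zf using pq a by simp_all
  have "S2 = (K + 1 - u^2 + z*u*w)/(-((1-3*a)*(1+a))/(2*a^2))"
    using sv[OF c2(1) e2] unfolding zf .
  also have "\<dots> = - ((K + 1 - u^2 + z*u*w) * (2*a^2))/((1-3*a)*(1+a))" by (rule hd(1)[OF a2])
  also have "(K + 1 - u^2 + z*u*w) * (2*a^2) = a*(2*a*(K+1-u^2) + (2*z*a)*u*w)"
    by (simp add: algebra_simps power2_eq_square)
  finally show "S2 = - a*(2*a*(K+1-u^2) + (1-a)*u*w)/((1-3*a)*(1+a))" unfolding zf by simp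
  have "S = (K*z*u - (K+1)*w)/(((1-3*a)*(1+a))/(2*a^2))"
    using sv[OF c2(2) e3] unfolding zf .
  also have "\<dots> = ((K*z*u - (K+1)*w) * (2*a^2))/((1-3*a)*(1+a))" by (rule hd(2)[OF a2])
  also have "(K*z*u - (K+1)*w) * (2*a^2) = a*(K*(2*z*a)*u - 2*a*(K+1)*w)"
    by (simp add: algebra_simps power2_eq_square)
  finally show "S = a*(K*(1-a)*u - 2*a*(K+1)*w)/((1-3*a)*(1+a))" unfolding zf by simp
qed

lemma wt_const: "wt (fls_const t) i l = fls_const (wt t i l)"
  unfolding wt_def by simp

lemma tvar_ne1: "tvar \<noteq> 1"
  unfolding tvar_def One_fract_def by (simp add: eq_fract one_pCons)



lemma sg_eq:
  fixes a u w K p :: "'a::field"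
  assumes "p \<noteq> 0" "a \<noteq> 0" "u \<noteq> 0"
  shows "(K*u - 2*(a*(u-w-1)/p))/((p/a)*u*a) = K/p - (2*a)/p^2*((u-w-1)/u)"
  using assms by (simp add: field_simps power2_eq_square)

theorem theorem2:
  fixes k :: nat
  assumes "k \<ge> 2"
  defines "T \<equiv> fls_const tvar"
      and "X \<equiv> (fls_X :: real poly fract fls)"
  defines "a \<equiv> X * (T - 1)"
  defines "\<phi> \<equiv> (1 - a) / (2 * a)"
  defines "\<gamma> \<equiv> of_nat k / (1 - 3 * a)
              - (2 * a) / (1 - 3 * a) ^ 2
                * ((chebU k \<phi> - chebU (k - 1) \<phi> - 1) / chebU k \<phi>)"
  shows "fps_to_fls (Gk k) =
    1 + (1 + 3 * a) / ((1 - 3 * a) * (1 + a)) *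
      ( 1 / (1 - X * \<gamma>)
        - (2 * a * (of_nat k + 1)) / ((1 + 3 * a) * chebU k \<phi>)
          * ( (1 - X * ((1 + of_nat k - chebU k \<phi>) / (1 - 3 * a))) / (1 - X * \<gamma>)
              + chebU (k - 1) \<phi> - 1)
        + of_nat k * a - 1)"
proof -
  have k1: "k \<ge> 1" using assms(1) by simp
  have X0: "X \<noteq> 0" unfolding X_def by simp
  have T1: "T - 1 = fls_const (tvar - 1)" unfolding T_def by (intro fls_eqI) simp
  have T1nz: "T - 1 \<noteq> 0"
    unfolding T1 using tvar_ne1 by (intro fls_nonzeroI[of _ 0]) simp
  have a0: "a \<noteq> 0" unfolding a_def using X0 T1nz by simp
  have aE: "a = fls_X * fls_const (tvar - 1)" unfolding a_def X_def T1 ..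
  have za: "2*\<phi>*a = 1 - a" unfolding \<phi>_def using a0 by simp
  have za': "2*\<phi>*(X*(T-1)) = 1 - X*(T-1)" using za unfolding a_def .
  have a0': "X*(T-1) \<noteq> 0" using a0 unfolding a_def .
  have pnz: "1 - 3*a \<noteq> 0"
    by (rule fls_nonzeroI[of _ 0]) (simp add: aE fls_X_times_conv_shift)
  have qnz: "1 + a \<noteq> 0"
    by (rule fls_nonzeroI[of _ 0]) (simp add: aE fls_X_times_conv_shift)
  have rnz: "1 + 3*a \<noteq> 0"
    by (rule fls_nonzeroI[of _ 0]) (simp add: aE fls_X_times_conv_shift)
  define u where "u = Vs \<phi> (k+1)"
  define w where "w = Vs \<phi> k"
  have cu: "chebU k \<phi> = u" unfolding u_def chebU_Vs by simp
  have cw: "chebU (k-1) \<phi> = w" unfolding w_def chebU_Vs using k1 by simp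
  have u0: "u \<noteq> 0"
  proof -
    define A where "A = fps_X * fps_const (tvar - 1)"
    have A: "fps_to_fls A = a" unfolding A_def aE by (simp add: fls_times_fps_to_fls)
    have e: "fps_to_fls (qq A k) = a^k * Vs \<phi> (k+1)" by (rule qq_fls[OF A za])
    have "qq A k $ 0 = 1" by (rule qq_0) (simp add: A_def)
    then have "qq A k \<noteq> 0" by auto
    then have "a^k * Vs \<phi> (k+1) \<noteq> 0" using e by (metis fps_to_fls_eq_0_iff)
    then show ?thesis unfolding u_def by simp
  qed
  have u0': "Vs \<phi> (k+1) \<noteq> 0" using u0 unfolding u_def .
  have zf: "2*(\<phi>-1) = (1-3*a)/a" using zfacts(1)[OF a0 \<phi>_def[THEN meta_eq_to_obj_eq]] .
  have z1: "2*(\<phi>-1) \<noteq> 0" unfolding zf using pnz a0 by simp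
  define \<sigma> where "\<sigma> = sg a \<phi> k"
  have D: "1 - X * \<sigma> \<noteq> 0"
  proof
    assume D0: "1 - X * \<sigma> = 0"
    have "\<forall>i\<in>{1..k}. Rv a \<phi> k i = 0"
    proof (rule fls_uniq[where c="wt tvar"])
      fix i assume i: "i \<in> {1..k}"
      have "Rv (X*(T-1)) \<phi> k i - X * (\<Sum>l\<in>{1..k}. wt T i l * Rv (X*(T-1)) \<phi> k l) = 1 - X * sg (X*(T-1)) \<phi> k"
        by (rule Req[OF i u0' a0' za'])
      then have "Rv a \<phi> k i - X * (\<Sum>l\<in>{1..k}. wt T i l * Rv a \<phi> k l) = 0"
        using D0 unfolding \<sigma>_def a_def by simp
      then show "Rv a \<phi> k i = fls_X * (\<Sum>l\<in>{1..k}. fls_const (wt tvar i l) * Rv a \<phi> k l)"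
        unfolding X_def T_def wt_const by simp
    qed simp
    then have "\<sigma> = 0" unfolding \<sigma>_def sg_def by simp
    with D0 show False by simp
  qed
  have D': "1 - X * sg (X*(T-1)) \<phi> k \<noteq> 0" using D unfolding \<sigma>_def a_def .
  have PF: "\<And>i j. i \<in> {1..k} \<Longrightarrow> j \<in> {1..k} \<Longrightarrow> Phi tvar k i j = Fm X a \<phi> k i j"
  proof -
    fix i j assume i: "i \<in> {1..k}" and j: "j \<in> {1..k}"
    have "\<forall>i\<in>{1..k}. Phi tvar k i j - Fm X a \<phi> k i j = 0"
    proof (rule fls_uniq[where c="wt tvar"])
      fix i assume i: "i \<in> {1..k}"
      have f: "Fm X a \<phi> k i j - X * (\<Sum>l\<in>{1..k}. wt T i l * Fm X a \<phi> k l j) = (if i = j then 1 else 0)"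
        using Feq[OF i j u0' a0' za' D'] unfolding a_def .
      have p: "Phi tvar k i j = (if i = j then 1 else 0) + fls_X * (\<Sum>l\<in>{1..k}. fls_const (wt tvar i l) * Phi tvar k l j)"
        by (rule Phi_eq)
      have "Phi tvar k i j - Fm X a \<phi> k i j
         = fls_X * (\<Sum>l\<in>{1..k}. fls_const (wt tvar i l) * Phi tvar k l j) - fls_X * (\<Sum>l\<in>{1..k}. fls_const (wt tvar i l) * Fm X a \<phi> k l j)"
        using f p unfolding X_def T_def wt_const by (simp add: algebra_simps)
      also have "\<dots> = fls_X * (\<Sum>l\<in>{1..k}. fls_const (wt tvar i l) * (Phi tvar k l j - Fm X a \<phi> k l j))"
        by (simp add: right_diff_distrib sum_subtractf)
      finally show "Phi tvar k i j - Fm X a \<phi> k i j = fls_X * (\<Sum>l\<in>{1..k}. fls_const (wt tvar i l) * (Phi tvar k l j - Fm X a \<phi> k l j))" .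
    qed simp
    then show "Phi tvar k i j = Fm X a \<phi> k i j" using i by simp
  qed
  define S1 where "S1 = (\<Sum>i\<in>{1..k}. Vs \<phi> i)"
  define S2 where "S2 = (\<Sum>i\<in>{1..k}. Vs \<phi> i ^ 2)"
  define S where "S = Sconv \<phi> k"
  have G1: "fps_to_fls (Gk k) = 1 - of_nat k + ((\<Sum>i\<in>{1..k}. Bm a \<phi> k i i) + X / (1 - X*\<sigma>) * (\<Sum>i\<in>{1..k}. Rv a \<phi> k i * Rv a \<phi> k i))"
  proof -
    have "(\<Sum>i\<in>{1..k}. Phi tvar k i i) = (\<Sum>i\<in>{1..k}. Fm X a \<phi> k i i)"
      using PF by simp
    also have "\<dots> = (\<Sum>i\<in>{1..k}. Bm a \<phi> k i i + X / (1 - X*\<sigma>) * (Rv a \<phi> k i * Rv a \<phi> k i))"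
      unfolding Fm_def \<sigma>_def by (intro sum.cong refl) (simp add: field_simps)
    also have "\<dots> = (\<Sum>i\<in>{1..k}. Bm a \<phi> k i i) + X / (1 - X*\<sigma>) * (\<Sum>i\<in>{1..k}. Rv a \<phi> k i * Rv a \<phi> k i)"
      by (simp add: sum.distrib sum_distrib_left)
    finally show ?thesis using Gk_Phi[of k] by simp
  qed
  have sgv: "\<sigma> = (of_nat k * u - 2 * S1) / (((1-3*a)/a) * u * a)"
    unfolding \<sigma>_def S1_def u_def using sgC[OF u0' a0 z1] unfolding zf .
  have sqv: "(\<Sum>i\<in>{1..k}. Rv a \<phi> k i * Rv a \<phi> k i) = (of_nat k * u^2 - 4*u*S1 + 2*S2 + 2*S) / (((1-3*a)/a) * u * a)^2"
    unfolding S1_def S2_def S_def u_def using sqC[OF u0' a0 z1] unfolding zf .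
  have dgv: "(\<Sum>i\<in>{1..k}. Bm a \<phi> k i i) = S / (a * u)"
    unfolding S_def u_def diagC by (simp add: mult.commute)
  have e1: "2*(\<phi>-1)*S1 = u - w - 1" unfolding S1_def u_def w_def by (rule Vs_sum1)
  have e2: "2*(1-\<phi>^2)*S2 = of_nat k + 1 - u^2 + \<phi>*u*w" unfolding S2_def u_def w_def by (rule Vs_sum2)
  have e3: "2*(\<phi>^2-1)*S = of_nat k*\<phi>*u - (of_nat k+1)*w" unfolding S_def u_def w_def by (rule Vs_sum3)
  note cf = closed_forms[OF a0 \<phi>_def[THEN meta_eq_to_obj_eq] pnz qnz e1 e2 e3]
  have gv: "\<gamma> = of_nat k/(1-3*a) - (2*a)/(1-3*a)^2 * ((u - w - 1)/u)"
    unfolding \<gamma>_def cu cw ..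
  have sg_g: "\<sigma> = \<gamma>"
    unfolding sgv gv cf(1) by (rule sg_eq[OF pnz a0 u0])
  have Dg: "1 - X*\<gamma> \<noteq> 0" using D sg_g by simp
  have "fps_to_fls (Gk k) = 1 - of_nat k + S/(a*u) + X/(1-X*\<gamma>) * ((of_nat k*u^2 - 4*u*S1 + 2*S2 + 2*S)/(((1-3*a)/a)*u*a)^2)"
    unfolding G1 dgv sqv sg_g by simp
  also have "\<dots> = 1 + (1 + 3 * a) / ((1 - 3 * a) * (1 + a)) *
      ( 1 / (1 - X * \<gamma>)
        - (2 * a * (of_nat k + 1)) / ((1 + 3 * a) * u)
          * ( (1 - X * ((1 + of_nat k - u) / (1 - 3 * a))) / (1 - X * \<gamma>)
              + w - 1)
        + of_nat k * a - 1)"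
    by (rule final_core2[OF a0 u0 pnz qnz rnz refl refl refl gv Dg cf])
  finally show ?thesis unfolding cu cw .
qed


end
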